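(* Let $(X_m)_{m\in\mathbb Z}$ and $(Y_m)_{m\in\mathbb Z}$ be homogeneous second order recurrence sequences with constant coefficients that possess the same recurrence relation. Let $a,b,c,d,e,m$ be integers with $$\Delta_{xy}:=X_{d-a}Y_{e-b}-X_{e-a}Y_{d-b}\neq 0.$$ Then $$(X_{d-a}Y_{e-b}-X_{e-a}Y_{d-b})X_{m-c}=(X_{d-c}Y_{e-b}-X_{e-c}Y_{d-b})X_{m-a}+(X_{d-a}X_{e-c}-X_{e-a}X_{d-c})Y_{m-b}.$$
   Context: A homogeneous second order recurrence sequence with constant coefficients is a sequence $(X_m)_{m\in\mathbb Z}$ of complex numbers for which there are constants $p,q\in\mathbb C$, $q\neq 0$, with $X_m=pX_{m-1}+qX_{m-2}$ for all $m\in\mathbb Z$. Two such sequences possess the same recurrence relation if they satisfy it with the same constants $p,q$. *)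

theory Defs
  imports Complex_Main
begin

definition sec_ord_rec :: "complex \<Rightarrow> complex \<Rightarrow> (int \<Rightarrow> complex) \<Rightarrow> bool" where
  "sec_ord_rec p q X \<longleftrightarrow> q \<noteq> 0 \<and> (\<forall>m::int. X m = p * X (m - 1) + q * X (m - 2))"

end

theory Submission
  imports Defs
begin

lemma span3:
  assumes A: "sec_ord_rec p q A" and B: "sec_ord_rec p q B" and C: "sec_ord_rec p q C"
  shows "\<exists>s t. A n = s*A 0 + t*A 1 \<and> B n = s*B 0 + t*B 1 \<and> C n = s*C 0 + t*C 1"
proof -
  define P where "P n \<longleftrightarrow> (\<exists>s t. A n = s*A 0 + t*A 1 \<and> B n = s*B 0 + t*B 1 \<and> C n = s*C 0 + t*C 1)" for n
  have q: "q \<noteq> 0" and rA: "\<And>m. A m = p * A (m - 1) + q * A (m - 2)"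
    and rB: "\<And>m. B m = p * B (m - 1) + q * B (m - 2)"
    and rC: "\<And>m. C m = p * C (m - 1) + q * C (m - 2)"
    using A B C unfolding sec_ord_rec_def by blast+
  have P0: "P 0" unfolding P_def by (rule exI[of _ 1], rule exI[of _ 0]) simp
  have P1: "P 1" unfolding P_def by (rule exI[of _ 0], rule exI[of _ 1]) simp
  have fwd: "P n" if "P (n-2)" "P (n-1)" for n
  proof -
    from that obtain s1 t1 s2 t2 where
      h1: "A (n-2) = s1*A 0 + t1*A 1" "B (n-2) = s1*B 0 + t1*B 1" "C (n-2) = s1*C 0 + t1*C 1" and
      h2: "A (n-1) = s2*A 0 + t2*A 1" "B (n-1) = s2*B 0 + t2*B 1" "C (n-1) = s2*C 0 + t2*C 1"
      unfolding P_def by blast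
    show ?thesis unfolding P_def
      apply (rule exI[of _ "p*s2+q*s1"], rule exI[of _ "p*t2+q*t1"])
      unfolding rA[of n] rB[of n] rC[of n] h1 h2 by (simp add: algebra_simps)
  qed
  have bwd: "P n" if "P (n+2)" "P (n+1)" for n
  proof -
    from that obtain s1 t1 s2 t2 where
      h1: "A (n+2) = s1*A 0 + t1*A 1" "B (n+2) = s1*B 0 + t1*B 1" "C (n+2) = s1*C 0 + t1*C 1" and
      h2: "A (n+1) = s2*A 0 + t2*A 1" "B (n+1) = s2*B 0 + t2*B 1" "C (n+1) = s2*C 0 + t2*C 1"
      unfolding P_def by blast
    have eA: "A n = (A (n+2) - p * A (n+1)) / q" using rA[of "n+2"] q by (simp add: field_simps)
    have eB: "B n = (B (n+2) - p * B (n+1)) / q" using rB[of "n+2"] q by (simp add: field_simps)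
    have eC: "C n = (C (n+2) - p * C (n+1)) / q" using rC[of "n+2"] q by (simp add: field_simps)
    show ?thesis unfolding P_def
      apply (rule exI[of _ "(s1 - p*s2)/q"], rule exI[of _ "(t1 - p*t2)/q"])
      unfolding eA eB eC h1 h2 using q by (simp add: field_simps)
  qed
  have pos: "P (int k) \<and> P (int k + 1)" for k
  proof (induction k)
    case 0 then show ?case using P0 P1 by simp
  next
    case (Suc k)
    then have "P (int k + 2)" using fwd[of "int k + 2"] by (simp add: add.commute)
    with Suc show ?case by (simp add: add.commute)
  qed
  have neg: "P (- int k) \<and> P (1 - int k)" for k
  proof (induction k)
    case 0 then show ?case using P0 P1 by simp
  next
    case (Suc k)
    then have "P (- int k - 1)" using bwd[of "- int k - 1"] by simp
    have "- int (Suc k) = - int k - 1" "1 - int (Suc k) = - int k" by simp_all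
    with Suc \<open>P (- int k - 1)\<close> show ?case by metis
  qed
  show ?thesis
  proof (cases "n \<ge> 0")
    case True then show ?thesis using pos[of "nat n"] unfolding P_def by simp
  next
    case False then show ?thesis using neg[of "nat (-n)"] unfolding P_def by simp
  qed
qed

lemma det0: fixes u0 u1 v0 v1 w0 w1 s1 t1 s2 t2 s3 t3 :: complex
  shows "((s1*u0+t1*u1) * (s2*v0+t2*v1) - (s2*u0+t2*u1) * (s1*v0+t1*v1)) * (s3*w0+t3*w1)
   = ((s1*w0+t1*w1) * (s2*v0+t2*v1) - (s2*w0+t2*w1) * (s1*v0+t1*v1)) * (s3*u0+t3*u1)
   + ((s1*u0+t1*u1) * (s2*w0+t2*w1) - (s2*u0+t2*u1) * (s1*w0+t1*w1)) * (s3*v0+t3*v1)"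
  by (simp add: algebra_simps)

theorem lemma1:
  fixes X Y :: "int \<Rightarrow> complex" and p q :: complex and a b c d e m :: int
  assumes "sec_ord_rec p q X" and "sec_ord_rec p q Y"
    and "X (d - a) * Y (e - b) - X (e - a) * Y (d - b) \<noteq> 0"
  shows "(X (d - a) * Y (e - b) - X (e - a) * Y (d - b)) * X (m - c) =
         (X (d - c) * Y (e - b) - X (e - c) * Y (d - b)) * X (m - a)
       + (X (d - a) * X (e - c) - X (e - a) * X (d - c)) * Y (m - b)"
proof -
  have sh: "sec_ord_rec p q (\<lambda>n. Z (n - k))" if "sec_ord_rec p q Z" for Z k
  proof -
    have "Z (n - k) = p * Z (n - 1 - k) + q * Z (n - 2 - k)" for n
      using that unfolding sec_ord_rec_def by (metis diff_right_commute)
    then show ?thesis using that unfolding sec_ord_rec_def by blast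
  qed
  define U where "U = (\<lambda>n. X (n - a))"
  define V where "V = (\<lambda>n. Y (n - b))"
  define W where "W = (\<lambda>n. X (n - c))"
  have U: "sec_ord_rec p q U" and V: "sec_ord_rec p q V" and W: "sec_ord_rec p q W"
    unfolding U_def V_def W_def using sh assms(1,2) by auto
  obtain s1 t1 where 1: "U d = s1*U 0 + t1*U 1" "V d = s1*V 0 + t1*V 1" "W d = s1*W 0 + t1*W 1"
    using span3[OF U V W] by blast
  obtain s2 t2 where 2: "U e = s2*U 0 + t2*U 1" "V e = s2*V 0 + t2*V 1" "W e = s2*W 0 + t2*W 1"
    using span3[OF U V W] by blast
  obtain s3 t3 where 3: "U m = s3*U 0 + t3*U 1" "V m = s3*V 0 + t3*V 1" "W m = s3*W 0 + t3*W 1"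
    using span3[OF U V W] by blast
  have "(U d * V e - U e * V d) * W m = (W d * V e - W e * V d) * U m + (U d * W e - U e * W d) * V m"
    unfolding 1 2 3 by (rule det0)
  then show ?thesis unfolding U_def V_def W_def by simp
qed

end
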